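(* In the hierarchical partition construction described in the context, let $A$ be any set occurring in some partition $\mathcal S_j$, and let $a_1$ be the largest level $j$ with $A\in\mathcal S_j$. Then the number of sets $B\neq A$ for which there exists a level $j$ with $A,B\in\mathcal S_j$ and $A$ knows $B$ at level $j$, and such that $A$ is responsible for the pair (i.e. $a_1\le b_1$, where $b_1$ is the largest level with $B\in\mathcal S_{b_1}$), is at most $\lambda^{3+\eta}$.
   Context: Let $(V,d)$ be a finite metric space with $|V|\ge 2$ which is doubling with constant $\lambda$: for every $v\in V$ and $r>0$ the open ball $B_{2r}(v)=\{u:d(u,v)<2r\}$ is contained in the union of at most $\lambda$ open balls $B_r(w)$, $w\in V$. Fix an integer $\eta\ge2$ and a real $\tau$ with $1+\frac{1}{2^{\eta-1}-1}\le\tau\le 2^{\eta}$. For $L\subseteq V$ and $r>0$, a greedy partition of $L$ with parameter $r$ is obtained by: set $L_0=L$; while $L_i\ne\emptyset$ choose any $v_i\in L_i$, let $P_i=\{u\in L_i: d(u,v_i)<2^{-\eta-1}r\}$ with leader $v_i$, and set $L_{i+1}=L_i\setminus P_i$. Hierarchical partition construction: choose $r_0$ with $0<r_0<\min_{u\ne v}d(u,v)$ and put $r_j=\tau^j r_0$. Let $\mathcal S_0=\{\{v\}:v\in V\}$, the leader of $\{v\}$ being $v$. While $\mathcal S_j$ has more than one element: let $L_j$ be the set of leaders of the sets in $\mathcal S_j$, let $\mathcal S'_{j+1}$ be a greedy partition of $L_j$ with parameter $2r_{j+1}$, and let $\mathcal S_{j+1}$ consist, for each $P\in\mathcal S'_{j+1}$,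 of the set $\bigcup\{S\in\mathcal S_j:\mathrm{leader}(S)\in P\}$, whose leader is defined to be the leader of $P$. Each $\mathcal S_j$ is a partition of $V$ and $\mathcal S_j$ refines $\mathcal S_{j+1}$, so a set occurs in a contiguous range of levels. For $S,S'\in\mathcal S_j$, $S$ knows $S'$ (at level $j$) if there are $v\in S$, $u\in S'$ with $d(v,u)<r_j$. *)

theory Defs
  imports Complex_Main
begin

definition metric_on :: "'a set \<Rightarrow> ('a \<Rightarrow> 'a \<Rightarrow> real) \<Rightarrow> bool" where
  "metric_on V d \<longleftrightarrow>
     (\<forall>u\<in>V. \<forall>v\<in>V. d u v \<ge> 0 \<and> (d u v = 0 \<longleftrightarrow> u = v) \<and> d u v = d v u) \<and>
     (\<forall>u\<in>V. \<forall>v\<in>V. \<forall>w\<in>V. d u w \<le> d u v + d v w)"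

definition open_ball :: "'a set \<Rightarrow> ('a \<Rightarrow> 'a \<Rightarrow> real) \<Rightarrow> 'a \<Rightarrow> real \<Rightarrow> 'a set" where
  "open_ball V d v r = {u \<in> V. d u v < r}"

definition doubling :: "'a set \<Rightarrow> ('a \<Rightarrow> 'a \<Rightarrow> real) \<Rightarrow> real \<Rightarrow> bool" where
  "doubling V d lam \<longleftrightarrow>
     (\<forall>v\<in>V. \<forall>r>0. \<exists>W. W \<subseteq> V \<and> finite W \<and> real (card W) \<le> lam \<and>
        open_ball V d v (2 * r) \<subseteq> (\<Union>w\<in>W. open_ball V d w r))"

inductive greedy_partition ::
  "('a \<Rightarrow> 'a \<Rightarrow> real) \<Rightarrow> nat \<Rightarrow> real \<Rightarrow> 'a set \<Rightarrow> ('a \<times> 'a set) list \<Rightarrow> bool"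
  for d :: "'a \<Rightarrow> 'a \<Rightarrow> real" and eta :: nat and r :: real where
  gp_Nil: "greedy_partition d eta r {} []"
| gp_Cons: "\<lbrakk> v \<in> L; P = {u \<in> L. d u v < r / 2 ^ (eta + 1)};
              greedy_partition d eta r (L - P) ps \<rbrakk>
           \<Longrightarrow> greedy_partition d eta r L ((v, P) # ps)"

text \<open>Level j of the hierarchy is a set of pairs (leader, cluster).\<close>
definition clusters :: "(nat \<Rightarrow> ('a \<times> 'a set) set) \<Rightarrow> nat \<Rightarrow> 'a set set" where
  "clusters S j = snd ` S j"

definition radius :: "real \<Rightarrow> real \<Rightarrow> nat \<Rightarrow> real" where
  "radius tau r0 j = tau ^ j * r0"

text \<open>S is a run of the hierarchical partition construction that stops at level m
  (S 0, ..., S m are the constructed levels; S m is the first with one element).\<close>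
definition hierarchy ::
  "'a set \<Rightarrow> ('a \<Rightarrow> 'a \<Rightarrow> real) \<Rightarrow> nat \<Rightarrow> real \<Rightarrow> real \<Rightarrow>
   (nat \<Rightarrow> ('a \<times> 'a set) set) \<Rightarrow> nat \<Rightarrow> bool" where
  "hierarchy V d eta tau r0 S m \<longleftrightarrow>
     S 0 = (\<lambda>v. (v, {v})) ` V \<and>
     card (S m) = 1 \<and>
     (\<forall>j<m. card (S j) > 1 \<and>
        (\<exists>ps. greedy_partition d eta (2 * radius tau r0 (Suc j)) (fst ` S j) ps \<and>
              S (Suc j) = (\<lambda>(v, P). (v, \<Union>{C. \<exists>w. (w, C) \<in> S j \<and> w \<in> P})) ` set ps))"

definition knows ::
  "('a \<Rightarrow> 'a \<Rightarrow> real) \<Rightarrow> real \<Rightarrow> real \<Rightarrow> 'a set \<Rightarrow> 'a set \<Rightarrow> nat \<Rightarrow> bool" where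
  "knows d tau r0 A B j \<longleftrightarrow> (\<exists>v\<in>A. \<exists>u\<in>B. d v u < radius tau r0 j)"

definition top_level :: "(nat \<Rightarrow> ('a \<times> 'a set) set) \<Rightarrow> nat \<Rightarrow> 'a set \<Rightarrow> nat" where
  "top_level S m A = (GREATEST j. j \<le> m \<and> A \<in> clusters S j)"

end

theory Submission
  imports Defs
begin

lemma gp_props:
  assumes "greedy_partition d eta r L ps"
  shows "r > 0 \<Longrightarrow> (\<forall>x\<in>L. d x x = 0) \<Longrightarrow>
         (\<forall>p\<in>set ps. fst p \<in> snd p \<and> snd p \<subseteq> L) \<and>
         (\<forall>p\<in>set ps. \<forall>x\<in>snd p. d x (fst p) < r/2^(eta+1)) \<and>
         (\<forall>x\<in>L. \<exists>p\<in>set ps. x \<in> snd p) \<and>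
         (\<forall>p\<in>set ps. \<forall>q\<in>set ps. fst p \<noteq> fst q \<longrightarrow> snd p \<inter> snd q = {} \<and>
            (r/2^(eta+1) \<le> d (fst q) (fst p) \<or> r/2^(eta+1) \<le> d (fst p) (fst q))) \<and>
         (\<forall>p\<in>set ps. \<forall>q\<in>set ps. fst p = fst q \<longrightarrow> p = q)"
using assms
proof induction
  case gp_Nil thus ?case by simp
next
  case (gp_Cons v L P ps)
  have vP: "v \<in> P" using gp_Cons.prems gp_Cons.hyps(1,2) by auto
  have IH: "(\<forall>p\<in>set ps. fst p \<in> snd p \<and> snd p \<subseteq> L - P) \<and>
         (\<forall>p\<in>set ps. \<forall>x\<in>snd p. d x (fst p) < r/2^(eta+1)) \<and>
         (\<forall>x\<in>L - P. \<exists>p\<in>set ps. x \<in> snd p) \<and>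
         (\<forall>p\<in>set ps. \<forall>q\<in>set ps. fst p \<noteq> fst q \<longrightarrow> snd p \<inter> snd q = {} \<and>
            (r/2^(eta+1) \<le> d (fst q) (fst p) \<or> r/2^(eta+1) \<le> d (fst p) (fst q))) \<and>
         (\<forall>p\<in>set ps. \<forall>q\<in>set ps. fst p = fst q \<longrightarrow> p = q)"
    using gp_Cons.IH gp_Cons.prems by auto
  have far: "\<forall>q\<in>set ps. r/2^(eta+1) \<le> d (fst q) v"
  proof
    fix q assume "q \<in> set ps"
    hence "fst q \<in> L - P" using IH by blast
    thus "r/2^(eta+1) \<le> d (fst q) v" using gp_Cons.hyps(2) by auto
  qed
  have c1: "\<forall>p\<in>set ((v,P)#ps). fst p \<in> snd p \<and> snd p \<subseteq> L"
    using IH vP gp_Cons.hyps(2) by auto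
  have c0: "\<forall>p\<in>set ((v,P)#ps). \<forall>x\<in>snd p. d x (fst p) < r/2^(eta+1)"
    using IH gp_Cons.hyps(2) by auto
  have c2: "\<forall>x\<in>L. \<exists>p\<in>set ((v,P)#ps). x \<in> snd p"
    using IH by force
  have c3: "\<forall>p\<in>set ((v,P)#ps). \<forall>q\<in>set ((v,P)#ps). fst p \<noteq> fst q \<longrightarrow> snd p \<inter> snd q = {} \<and>
            (r/2^(eta+1) \<le> d (fst q) (fst p) \<or> r/2^(eta+1) \<le> d (fst p) (fst q))"
  proof (intro ballI impI)
    fix p q assume p: "p \<in> set ((v,P)#ps)" and q: "q \<in> set ((v,P)#ps)" and ne: "fst p \<noteq> fst q"
    show "snd p \<inter> snd q = {} \<and>
            (r/2^(eta+1) \<le> d (fst q) (fst p) \<or> r/2^(eta+1) \<le> d (fst p) (fst q))"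
    proof (cases "p = (v,P)")
      case True
      then have "q \<in> set ps" using q ne by auto
      then show ?thesis using True IH far by auto
    next
      case False
      then have pp: "p \<in> set ps" using p by auto
      show ?thesis
      proof (cases "q = (v,P)")
        case True
        then show ?thesis using pp IH far by auto
      next
        case False
        then have "q \<in> set ps" using q by auto
        then show ?thesis using pp IH ne by blast
      qed
    qed
  qed
  have c4: "\<forall>p\<in>set ((v,P)#ps). \<forall>q\<in>set ((v,P)#ps). fst p = fst q \<longrightarrow> p = q"
  proof -
    have "\<forall>q\<in>set ps. fst q \<noteq> v" using IH vP by fastforce
    then show ?thesis using IH by auto
  qed
  show ?case using c0 c1 c2 c3 c4 by blast
qed


lemma lam_nonneg:
  fixes V :: "'a set"
  assumes dbl: "doubling V d lam" and c: "c \<in> V"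
  shows "lam \<ge> 0"
proof -
  have "\<exists>W. W \<subseteq> V \<and> finite W \<and> real (card W) \<le> lam \<and>
      open_ball V d c (2 * 1) \<subseteq> (\<Union>w\<in>W. open_ball V d w 1)"
    using dbl c unfolding doubling_def by (metis zero_less_one)
  then obtain W :: "'a set" where "real (card W) \<le> lam" by blast
  then show ?thesis by linarith
qed

lemma cover:
  assumes met: "metric_on V d" and dbl: "doubling V d lam"
  shows "c \<in> V \<Longrightarrow> rho > 0 \<Longrightarrow> \<exists>W. W \<subseteq> V \<and> finite W \<and> real (card W) \<le> lam ^ k \<and>
           open_ball V d c (2 ^ k * rho) \<subseteq> (\<Union>w\<in>W. open_ball V d w rho)"
proof (induction k arbitrary: rho)
  case 0
  then show ?case by (intro exI[of _ "{c}"]) auto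
next
  case (Suc k)
  have lam0: "lam \<ge> 0" using lam_nonneg[OF dbl Suc.prems(1)] .
  obtain W where W: "W \<subseteq> V" "finite W" "real (card W) \<le> lam ^ k"
    "open_ball V d c (2 ^ k * (2*rho)) \<subseteq> (\<Union>w\<in>W. open_ball V d w (2*rho))"
    using Suc.IH[of "2*rho"] Suc.prems by auto
  have "\<forall>w\<in>W. \<exists>U. U \<subseteq> V \<and> finite U \<and> real (card U) \<le> lam \<and>
        open_ball V d w (2 * rho) \<subseteq> (\<Union>u\<in>U. open_ball V d u rho)"
  proof
    fix w assume "w \<in> W"
    then have "w \<in> V" using W(1) by blast
    then show "\<exists>U. U \<subseteq> V \<and> finite U \<and> real (card U) \<le> lam \<and>
        open_ball V d w (2 * rho) \<subseteq> (\<Union>u\<in>U. open_ball V d u rho)"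
      using dbl Suc.prems(2) unfolding doubling_def by blast
  qed
  then obtain f where f0: "\<forall>w\<in>W. f w \<subseteq> V \<and> finite (f w) \<and> real (card (f w)) \<le> lam \<and>
        open_ball V d w (2 * rho) \<subseteq> (\<Union>u\<in>f w. open_ball V d u rho)"
    by (rule bchoice[elim_format]) blast
  have f: "\<And>w. w \<in> W \<Longrightarrow> f w \<subseteq> V \<and> finite (f w) \<and> real (card (f w)) \<le> lam \<and>
        open_ball V d w (2 * rho) \<subseteq> (\<Union>u\<in>f w. open_ball V d u rho)" using f0 by blast
  define W' where "W' = (\<Union>w\<in>W. f w)"
  have "real (card W') \<le> real (\<Sum>w\<in>W. card (f w))"
    unfolding W'_def using card_UN_le[OF W(2), of f] by linarith
  also have "\<dots> = (\<Sum>w\<in>W. real (card (f w)))" by simp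
  also have "\<dots> \<le> (\<Sum>w\<in>W. lam)" by (rule sum_mono) (use f in auto)
  also have "\<dots> = real (card W) * lam" by simp
  also have "\<dots> \<le> lam ^ k * lam" using W(3) lam0 by (rule mult_right_mono)
  finally have cW': "real (card W') \<le> lam ^ Suc k" by (simp add: mult.commute)
  have "open_ball V d c (2 ^ Suc k * rho) \<subseteq> (\<Union>w\<in>W'. open_ball V d w rho)"
  proof
    fix x assume "x \<in> open_ball V d c (2 ^ Suc k * rho)"
    moreover have "(2::real) ^ Suc k * rho = 2 ^ k * (2*rho)" by simp
    ultimately have "x \<in> open_ball V d c (2 ^ k * (2*rho))" by metis
    then obtain w where w: "w \<in> W" "x \<in> open_ball V d w (2*rho)" using W(4) by blast
    then have "x \<in> (\<Union>u\<in>f w. open_ball V d u rho)" using f[OF w(1)] by blast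
    then obtain u where "u \<in> f w" "x \<in> open_ball V d u rho" by blast
    moreover have "u \<in> W'" using w(1) \<open>u \<in> f w\<close> unfolding W'_def by blast
    ultimately show "x \<in> (\<Union>w\<in>W'. open_ball V d w rho)" by blast
  qed
  moreover have "W' \<subseteq> V" "finite W'" using f W unfolding W'_def by auto
  ultimately show ?case using cW' by blast
qed

lemma packing:
  assumes met: "metric_on V d" and dbl: "doubling V d lam" and c: "c \<in> V" and rho: "rho > 0"
    and X: "X \<subseteq> open_ball V d c (2 ^ k * rho)"
    and sep: "\<forall>x\<in>X. \<forall>y\<in>X. x \<noteq> y \<longrightarrow> 2 * rho \<le> d x y"
  shows "real (card X) \<le> lam ^ k"
proof -
  obtain W where W: "W \<subseteq> V" "finite W" "real (card W) \<le> lam ^ k"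
    "open_ball V d c (2 ^ k * rho) \<subseteq> (\<Union>w\<in>W. open_ball V d w rho)"
    using cover[OF met dbl c rho, where k=k] by auto
  have "\<forall>x\<in>X. \<exists>w\<in>W. x \<in> open_ball V d w rho" using X W(4) by blast
  then obtain g where g0: "\<forall>x\<in>X. g x \<in> W \<and> x \<in> open_ball V d (g x) rho"
    using bchoice[of X "\<lambda>x w. w \<in> W \<and> x \<in> open_ball V d w rho"] by blast
  have g: "\<And>x. x \<in> X \<Longrightarrow> g x \<in> W \<and> x \<in> open_ball V d (g x) rho" using g0 by blast
  have "inj_on g X"
  proof (rule inj_onI, rule ccontr)
    fix x y assume xy: "x \<in> X" "y \<in> X" "g x = g y" "x \<noteq> y"
    have xV: "x \<in> V" "y \<in> V" "g x \<in> V" using g xy W(1) unfolding open_ball_def by auto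
    have "d x y \<le> d x (g x) + d (g x) y" using met xV unfolding metric_on_def by blast
    also have "d (g x) y = d y (g x)" using met xV unfolding metric_on_def by blast
    finally have "d x y < 2 * rho" using g[OF xy(1)] g[OF xy(2)] xy(3) unfolding open_ball_def by auto
    then show False using sep xy by force
  qed
  then have "card X \<le> card W" using card_inj_on_le[of g X W] g W(2) by blast
  then show ?thesis using W(3) by linarith
qed


lemma tau_facts:
  assumes eta2: "eta \<ge> 2" and tlow: "1 + 1 / (2 ^ (eta - 1) - 1) \<le> (tau::real)"
  shows "tau \<ge> 1" and "1/2 + tau / 2^eta \<le> tau / 2"
proof -
  define t :: real where "t = 2 ^ (eta - 1)"
  have "(2::real) ^ (eta - 1) \<ge> 2 ^ 1" by (rule power_increasing) (use eta2 in auto)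
  then have t2: "t \<ge> 2" unfolding t_def by simp
  have e: "(2::real) ^ eta = 2 * t" unfolding t_def using eta2
    by (metis Suc_diff_1 less_le_trans pos2 power_Suc zero_less_numeral numeral_2_eq_2 less_2_cases_iff not_less_eq_eq)
  have "1 / (t - 1) \<ge> 0" using t2 by simp
  then show "tau \<ge> 1" using tlow unfolding t_def by linarith
  have "tau * (t - 1) \<ge> (1 + 1/(t-1)) * (t - 1)" using tlow t2 unfolding t_def[symmetric]
    by (intro mult_right_mono) auto
  also have "(1 + 1/(t-1)) * (t - 1) = t" using t2 by (simp add: field_simps)
  finally have "tau * (t - 1) \<ge> t" .
  then have "t + tau \<le> tau * t" by (simp add: algebra_simps)
  then show "1/2 + tau / 2^eta \<le> tau / 2" unfolding e using t2 by (simp add: field_simps)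
qed

context
  fixes V :: "'a set" and d :: "'a \<Rightarrow> 'a \<Rightarrow> real" and eta :: nat and tau r0 :: real
    and S :: "nat \<Rightarrow> ('a \<times> 'a set) set" and m :: nat
  assumes met: "metric_on V d"
    and eta2: "eta \<ge> 2"
    and tlow: "1 + 1 / (2 ^ (eta - 1) - 1) \<le> tau"
    and r0pos: "0 < r0" and sep0: "\<forall>u\<in>V. \<forall>v\<in>V. u \<noteq> v \<longrightarrow> r0 < d u v"
    and hier: "hierarchy V d eta tau r0 S m"
begin

lemma d0: "x \<in> V \<Longrightarrow> d x x = 0" using met unfolding metric_on_def by blast
lemma dsym: "x \<in> V \<Longrightarrow> y \<in> V \<Longrightarrow> d x y = d y x" using met unfolding metric_on_def by blast
lemma dtri: "x \<in> V \<Longrightarrow> y \<in> V \<Longrightarrow> z \<in> V \<Longrightarrow> d x z \<le> d x y + d y z"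
  using met unfolding metric_on_def by blast

lemma rad_pos: "radius tau r0 j > 0"
  using tau_facts(1)[OF eta2 tlow] r0pos unfolding radius_def by simp

lemma rad_Suc: "radius tau r0 (Suc j) = tau * radius tau r0 j"
  unfolding radius_def by simp

lemma rad_step: "radius tau r0 j / 2 + radius tau r0 (Suc j) / 2^eta \<le> radius tau r0 (Suc j) / 2"
proof -
  have "radius tau r0 j * (1/2 + tau / 2^eta) \<le> radius tau r0 j * (tau / 2)"
    using tau_facts(2)[OF eta2 tlow] rad_pos[of j] by (intro mult_left_mono) auto
  then show ?thesis unfolding rad_Suc by (simp add: algebra_simps)
qed

lemma rad_mono: "i \<le> j \<Longrightarrow> radius tau r0 i \<le> radius tau r0 j"
  unfolding radius_def using tau_facts(1)[OF eta2 tlow] r0pos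
  by (intro mult_right_mono power_increasing) auto

lemma H0: "S 0 = (\<lambda>v. (v, {v})) ` V" using hier unfolding hierarchy_def by blast

lemma Hstep: "j < m \<Longrightarrow> \<exists>ps. greedy_partition d eta (2 * radius tau r0 (Suc j)) (fst ` S j) ps \<and>
              S (Suc j) = (\<lambda>(v, P). (v, \<Union>{C. \<exists>w. (w, C) \<in> S j \<and> w \<in> P})) ` set ps"
  using hier unfolding hierarchy_def by blast

lemma Hfin: "j \<le> m \<Longrightarrow> finite (S j)"
proof -
  assume "j \<le> m"
  then have "card (S j) > 0" using hier unfolding hierarchy_def
    by (cases "j = m") (auto dest: le_neq_implies_less)
  then show ?thesis using card_gt_0_iff by blast
qed

lemma inv:
  "j \<le> m \<Longrightarrow>
   (\<forall>p\<in>S j. fst p \<in> snd p \<and> snd p \<subseteq> V \<and> (\<forall>x\<in>snd p. d x (fst p) \<le> radius tau r0 j / 2)) \<and>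
   (\<forall>p\<in>S j. \<forall>q\<in>S j. fst p \<noteq> fst q \<longrightarrow> snd p \<inter> snd q = {} \<and> radius tau r0 j / 2^eta \<le> d (fst p) (fst q)) \<and>
   (\<forall>p\<in>S j. \<forall>q\<in>S j. fst p = fst q \<longrightarrow> p = q)"
proof (induction j)
  case 0
  have a: "\<forall>p\<in>S 0. fst p \<in> snd p \<and> snd p \<subseteq> V \<and> (\<forall>x\<in>snd p. d x (fst p) \<le> radius tau r0 0 / 2)"
    using H0 d0 rad_pos[of 0] by auto
  have "r0 / 2^eta \<le> r0" using r0pos by (simp add: divide_le_eq_1 field_simps)
  then have b: "\<forall>p\<in>S 0. \<forall>q\<in>S 0. fst p \<noteq> fst q \<longrightarrow> snd p \<inter> snd q = {} \<and> radius tau r0 0 / 2^eta \<le> d (fst p) (fst q)"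
    using H0 sep0 unfolding radius_def by fastforce
  have c: "\<forall>p\<in>S 0. \<forall>q\<in>S 0. fst p = fst q \<longrightarrow> p = q" using H0 by auto
  show ?case using a b c by blast
next
  case (Suc i)
  then have im: "i < m" by simp
  note IH = Suc.IH[OF less_imp_le[OF im]]
  have i1: "w \<in> C \<and> C \<subseteq> V \<and> (\<forall>x\<in>C. d x w \<le> radius tau r0 i / 2)" if "(w, C) \<in> S i" for w C
    using bspec[OF conjunct1[OF IH] that] by simp
  have i2: "C \<inter> C' = {}" if "(w, C) \<in> S i" "(w', C') \<in> S i" "w \<noteq> w'" for w C w' C'
    using bspec[OF bspec[OF conjunct1[OF conjunct2[OF IH]] that(1)] that(2)] that(3) by simp
  obtain ps where gp: "greedy_partition d eta (2 * radius tau r0 (Suc i)) (fst ` S i) ps"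
    and SS: "S (Suc i) = (\<lambda>(v, P). (v, \<Union>{C. \<exists>w. (w, C) \<in> S i \<and> w \<in> P})) ` set ps"
    using Hstep[OF im] by blast
  define M where "M P = \<Union>{C. \<exists>w. (w, C) \<in> S i \<and> w \<in> P}" for P
  have SS': "S (Suc i) = (\<lambda>a. (fst a, M (snd a))) ` set ps" unfolding SS M_def by (auto simp: case_prod_beta)
  have LV: "fst ` S i \<subseteq> V" using i1 by force
  have r': "2 * radius tau r0 (Suc i) / 2 ^ (eta + 1) = radius tau r0 (Suc i) / 2 ^ eta" by simp
  have G: "(\<forall>p\<in>set ps. fst p \<in> snd p \<and> snd p \<subseteq> fst ` S i) \<and>
         (\<forall>p\<in>set ps. \<forall>x\<in>snd p. d x (fst p) < radius tau r0 (Suc i) / 2 ^ eta) \<and>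
         (\<forall>x\<in>fst ` S i. \<exists>p\<in>set ps. x \<in> snd p) \<and>
         (\<forall>p\<in>set ps. \<forall>q\<in>set ps. fst p \<noteq> fst q \<longrightarrow> snd p \<inter> snd q = {} \<and>
            (radius tau r0 (Suc i) / 2 ^ eta \<le> d (fst q) (fst p) \<or> radius tau r0 (Suc i) / 2 ^ eta \<le> d (fst p) (fst q))) \<and>
         (\<forall>p\<in>set ps. \<forall>q\<in>set ps. fst p = fst q \<longrightarrow> p = q)"
  proof -
    have "\<forall>x\<in>fst ` S i. d x x = 0" using d0 LV by blast
    then show ?thesis using gp_props[OF gp] rad_pos[of "Suc i"] unfolding r' by simp
  qed
  have A: "\<forall>p\<in>S (Suc i). fst p \<in> snd p \<and> snd p \<subseteq> V \<and> (\<forall>x\<in>snd p. d x (fst p) \<le> radius tau r0 (Suc i) / 2)"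
  proof
    fix p assume "p \<in> S (Suc i)"
    then obtain a where a: "a \<in> set ps" "p = (fst a, M (snd a))" using SS' by blast
    have "fst a \<in> fst ` S i" using G a by blast
    then obtain C where "(fst a, C) \<in> S i" by force
    then have "fst a \<in> C" using i1 by blast
    then have 1: "fst p \<in> snd p" using a \<open>(fst a, C) \<in> S i\<close> G unfolding M_def by auto
    have 2: "snd p \<subseteq> V" using a i1 unfolding M_def by auto
    have 3: "\<forall>x\<in>snd p. d x (fst p) \<le> radius tau r0 (Suc i) / 2"
    proof
      fix x assume "x \<in> snd p"
      then obtain w C where wC: "(w, C) \<in> S i" "w \<in> snd a" "x \<in> C" using a unfolding M_def by auto
      have xV: "x \<in> V" "w \<in> V" using i1[OF wC(1)] wC by auto
      have "fst a \<in> fst ` S i" using G a(1) by blast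
      then have vV: "fst a \<in> V" using LV by blast
      have t1: "d x (fst a) \<le> d x w + d w (fst a)" using dtri xV vV by blast
      have t2: "d x w \<le> radius tau r0 i / 2" using i1[OF wC(1)] wC by auto
      have t3: "d w (fst a) < radius tau r0 (Suc i) / 2 ^ eta" using G a wC by blast
      have "d x (fst a) < radius tau r0 i / 2 + radius tau r0 (Suc i) / 2 ^ eta" using t1 t2 t3 by linarith
      moreover have "fst p = fst a" using a(2) by simp
      ultimately show "d x (fst p) \<le> radius tau r0 (Suc i) / 2" using rad_step[of i] by (metis less_le_trans less_imp_le)
    qed
    show "fst p \<in> snd p \<and> snd p \<subseteq> V \<and> (\<forall>x\<in>snd p. d x (fst p) \<le> radius tau r0 (Suc i) / 2)"
      using 1 2 3 by blast
  qed
  have B: "\<forall>p\<in>S (Suc i). \<forall>q\<in>S (Suc i). fst p \<noteq> fst q \<longrightarrow> snd p \<inter> snd q = {} \<and> radius tau r0 (Suc i) / 2^eta \<le> d (fst p) (fst q)"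
  proof (intro ballI impI)
    fix p q assume p: "p \<in> S (Suc i)" and q: "q \<in> S (Suc i)" and ne: "fst p \<noteq> fst q"
    obtain a where a: "a \<in> set ps" "p = (fst a, M (snd a))" using SS' p by blast
    obtain b where b: "b \<in> set ps" "q = (fst b, M (snd b))" using SS' q by blast
    have neab: "fst a \<noteq> fst b" using a b ne by simp
    have dis: "snd a \<inter> snd b = {}" using G a b neab by blast
    have "fst a \<in> fst ` S i" "fst b \<in> fst ` S i" using G a(1) b(1) by blast+
    then have abV: "fst a \<in> V" "fst b \<in> V" using LV by blast+
    have dist: "radius tau r0 (Suc i) / 2^eta \<le> d (fst a) (fst b)"
      using G a b neab dsym[OF abV] by force
    have "M (snd a) \<inter> M (snd b) = {}"
    proof (rule ccontr)
      assume "M (snd a) \<inter> M (snd b) \<noteq> {}"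
      then obtain x w C w' C' where "(w, C) \<in> S i" "w \<in> snd a" "x \<in> C"
        "(w', C') \<in> S i" "w' \<in> snd b" "x \<in> C'" unfolding M_def by blast
      moreover have "w \<noteq> w'" using calculation dis by blast
      ultimately show False using i2 by blast
    qed
    then show "snd p \<inter> snd q = {} \<and> radius tau r0 (Suc i) / 2^eta \<le> d (fst p) (fst q)"
      using a b dist by simp
  qed
  have C: "\<forall>p\<in>S (Suc i). \<forall>q\<in>S (Suc i). fst p = fst q \<longrightarrow> p = q"
    using G unfolding SS' by auto
  show ?case using A B C by blast
qed

lemma refine1: "i < m \<Longrightarrow> p \<in> S i \<Longrightarrow> \<exists>q\<in>S (Suc i). snd p \<subseteq> snd q"
proof -
  assume im: "i < m" and p: "p \<in> S i"
  obtain ps where gp: "greedy_partition d eta (2 * radius tau r0 (Suc i)) (fst ` S i) ps"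
    and SS: "S (Suc i) = (\<lambda>(v, P). (v, \<Union>{C. \<exists>w. (w, C) \<in> S i \<and> w \<in> P})) ` set ps"
    using Hstep[OF im] by blast
  have LV: "fst ` S i \<subseteq> V" using inv[of i] im by auto
  have "\<forall>x\<in>fst ` S i. d x x = 0" using d0 LV by blast
  moreover have "0 < 2 * radius tau r0 (Suc i)" using rad_pos[of "Suc i"] by simp
  ultimately have "\<forall>x\<in>fst ` S i. \<exists>p\<in>set ps. x \<in> snd p"
    using gp_props[OF gp] by blast
  then obtain a where a: "a \<in> set ps" "fst p \<in> snd a" using p by blast
  have q1: "(fst a, \<Union>{C. \<exists>w. (w, C) \<in> S i \<and> w \<in> snd a}) \<in> S (Suc i)"
    unfolding SS using a by (auto simp: case_prod_beta intro!: image_eqI[of _ _ a])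
  have q2: "snd p \<subseteq> \<Union>{C. \<exists>w. (w, C) \<in> S i \<and> w \<in> snd a}"
    using a p by (intro Union_upper) (auto intro: exI[of _ "fst p"])
  show ?thesis by (rule bexI[OF _ q1]) (simp only: snd_conv q2)
qed

lemma refine: "j \<le> i \<Longrightarrow> i \<le> m \<Longrightarrow> p \<in> S j \<Longrightarrow> \<exists>q\<in>S i. snd p \<subseteq> snd q"
proof (induction i)
  case 0 then show ?case by auto
next
  case (Suc i)
  show ?case
  proof (cases "j = Suc i")
    case True then show ?thesis using Suc by blast
  next
    case False
    then obtain q where "q \<in> S i" "snd p \<subseteq> snd q" using Suc by auto
    moreover obtain q' where "q' \<in> S (Suc i)" "snd q \<subseteq> snd q'"
      using refine1[of i q] Suc calculation by auto
    ultimately show ?thesis by blast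
  qed
qed

lemma contig: "j \<le> i \<Longrightarrow> i \<le> k \<Longrightarrow> k \<le> m \<Longrightarrow> B \<in> clusters S j \<Longrightarrow> B \<in> clusters S k
  \<Longrightarrow> B \<in> clusters S i"
proof -
  assume ji: "j \<le> i" and ik: "i \<le> k" and km: "k \<le> m" and Bj: "B \<in> clusters S j" and Bk: "B \<in> clusters S k"
  obtain p where p: "p \<in> S j" "snd p = B" using Bj unfolding clusters_def by blast
  obtain q where q: "q \<in> S i" "B \<subseteq> snd q" using refine[OF ji _ p(1)] ik km p by auto
  obtain q' where q': "q' \<in> S k" "snd q \<subseteq> snd q'" using refine[OF ik km q(1)] by auto
  obtain b where b: "b \<in> S k" "snd b = B" using Bk unfolding clusters_def by blast
  have "fst p \<in> B" using inv[of j] p ji ik km by auto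
  then have "snd b \<inter> snd q' \<noteq> {}" using b q q' by blast
  then have "fst b = fst q'" using inv[OF km] b(1) q'(1) by blast
  then have "b = q'" using inv[OF km] b(1) q'(1) by blast
  then have "snd q = B" using q q' b by blast
  then show ?thesis using q unfolding clusters_def by blast
qed

end


theorem lemma7:
  fixes V :: "'a set" and d :: "'a \<Rightarrow> 'a \<Rightarrow> real" and lam :: real
    and eta :: nat and tau r0 :: real
    and S :: "nat \<Rightarrow> ('a \<times> 'a set) set" and m :: nat and A :: "'a set" and j0 :: nat
  assumes "finite V" and "card V \<ge> 2"
    and "metric_on V d"
    and "doubling V d lam"
    and "eta \<ge> 2"
    and "1 + 1 / (2 ^ (eta - 1) - 1) \<le> tau" and "tau \<le> 2 ^ eta"
    and "0 < r0" and "\<forall>u\<in>V. \<forall>v\<in>V. u \<noteq> v \<longrightarrow> r0 < d u v"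
    and "hierarchy V d eta tau r0 S m"
    and "j0 \<le> m" and "A \<in> clusters S j0"
  shows "real (card {B. B \<noteq> A \<and>
                      (\<exists>j\<le>m. A \<in> clusters S j \<and> B \<in> clusters S j \<and> knows d tau r0 A B j) \<and>
                      top_level S m A \<le> top_level S m B})
         \<le> lam ^ (3 + eta)"
proof -
  note I = inv[OF assms(3,5,6,8,9,10)]
  note Ct = contig[OF assms(3,5,6,8,9,10)]
  note Fin = Hfin[OF assms(3,5,6,8,9,10)]
  note Rm = rad_mono[OF assms(3,5,6,8,9,10)]
  note Rp = rad_pos[OF assms(3,5,6,8,9,10)]
  note dsy = dsym[OF assms(3,5,6,8,9,10)]
  note dtr = dtri[OF assms(3,5,6,8,9,10)]
  have topI: "top_level S m B \<le> m \<and> B \<in> clusters S (top_level S m B)"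
    and topL: "\<And>j. j \<le> m \<Longrightarrow> B \<in> clusters S j \<Longrightarrow> j \<le> top_level S m B"
    if "k \<le> m" "B \<in> clusters S k" for B k
  proof -
    show "top_level S m B \<le> m \<and> B \<in> clusters S (top_level S m B)"
      unfolding top_level_def
      by (rule GreatestI_nat[of "\<lambda>j. j \<le> m \<and> B \<in> clusters S j" k m]) (use that in auto)
    show "\<And>j. j \<le> m \<Longrightarrow> B \<in> clusters S j \<Longrightarrow> j \<le> top_level S m B"
      unfolding top_level_def
      by (rule Greatest_le_nat[of "\<lambda>j. j \<le> m \<and> B \<in> clusters S j" _ m]) auto
  qed
  define a where "a = top_level S m A"
  have am: "a \<le> m" and Aa: "A \<in> clusters S a" using topI[OF assms(11,12)] unfolding a_def by auto
  define T where "T = {B \<in> clusters S a. \<exists>x\<in>A. \<exists>y\<in>B. d x y < radius tau r0 a}"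
  have sub: "{B. B \<noteq> A \<and>
                      (\<exists>j\<le>m. A \<in> clusters S j \<and> B \<in> clusters S j \<and> knows d tau r0 A B j) \<and>
                      top_level S m A \<le> top_level S m B} \<subseteq> T"
  proof
    fix B assume "B \<in> {B. B \<noteq> A \<and>
                      (\<exists>j\<le>m. A \<in> clusters S j \<and> B \<in> clusters S j \<and> knows d tau r0 A B j) \<and>
                      top_level S m A \<le> top_level S m B}"
    then obtain j where j: "j \<le> m" "A \<in> clusters S j" "B \<in> clusters S j" "knows d tau r0 A B j"
      and ab: "a \<le> top_level S m B" unfolding a_def by blast
    have ja: "j \<le> a" unfolding a_def using topL[OF assms(11,12) j(1,2)] .
    have Btop: "top_level S m B \<le> m" "B \<in> clusters S (top_level S m B)" using topI[OF j(1,3)] by auto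
    have Ba: "B \<in> clusters S a" using Ct[OF ja ab Btop(1) j(3) Btop(2)] .
    obtain x y where "x \<in> A" "y \<in> B" "d x y < radius tau r0 j" using j(4) unfolding knows_def by blast
    moreover have "radius tau r0 j \<le> radius tau r0 a" using Rm ja by blast
    ultimately show "B \<in> T" unfolding T_def using Ba by force
  qed
  have finT: "finite T" unfolding T_def clusters_def using Fin[OF am] by auto
  define ld where "ld B = (SOME v. (v, B) \<in> S a)" for B
  have ldp: "(ld B, B) \<in> S a" if "B \<in> clusters S a" for B
    unfolding ld_def using that unfolding clusters_def by (auto intro: someI)
  have inj: "inj_on ld T"
  proof (rule inj_onI)
    fix B B' assume "B \<in> T" "B' \<in> T" "ld B = ld B'"
    then have "B \<in> clusters S a" "B' \<in> clusters S a" "ld B = ld B'" unfolding T_def by auto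
    then have p1: "(ld B, B) \<in> S a" and p2: "(ld B', B') \<in> S a" and e: "ld B = ld B'"
      using ldp by blast+
    have "fst (ld B, B) = fst (ld B', B') \<longrightarrow> (ld B, B) = (ld B', B')"
      using bspec[OF bspec[OF conjunct2[OF conjunct2[OF I[OF am]]] p1] p2] .
    then show "B = B'" using e by simp
  qed
  have pA: "(ld A, A) \<in> S a" using ldp[OF Aa] .
  have props: "\<And>B. B \<in> clusters S a \<Longrightarrow> ld B \<in> B \<and> B \<subseteq> V \<and> (\<forall>x\<in>B. d x (ld B) \<le> radius tau r0 a / 2)"
  proof -
    fix B assume "B \<in> clusters S a"
    then have "(ld B, B) \<in> S a" using ldp by blast
    from bspec[OF conjunct1[OF I[OF am]] this]
    show "ld B \<in> B \<and> B \<subseteq> V \<and> (\<forall>x\<in>B. d x (ld B) \<le> radius tau r0 a / 2)" by simp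
  qed
  define rho where "rho = radius tau r0 a / 2 ^ (eta + 1)"
  have rho: "rho > 0" unfolding rho_def using Rp by simp
  have e1: "2 ^ (eta + 2) * rho = 2 * radius tau r0 a" unfolding rho_def by (simp add: power_add)
  have e2: "2 * rho = radius tau r0 a / 2 ^ eta" unfolding rho_def by simp
  have AV: "ld A \<in> V" using props[OF Aa] by blast
  have X: "ld ` T \<subseteq> open_ball V d (ld A) (2 ^ (eta + 2) * rho)"
  proof
    fix z assume "z \<in> ld ` T"
    then obtain B where B: "B \<in> T" "z = ld B" by blast
    then have Bc: "B \<in> clusters S a" unfolding T_def by blast
    obtain x y where xy: "x \<in> A" "y \<in> B" "d x y < radius tau r0 a" using B unfolding T_def by blast
    have PB: "ld B \<in> B \<and> B \<subseteq> V \<and> (\<forall>x\<in>B. d x (ld B) \<le> radius tau r0 a / 2)" using props[OF Bc] .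
    have PA: "ld A \<in> A \<and> A \<subseteq> V \<and> (\<forall>x\<in>A. d x (ld A) \<le> radius tau r0 a / 2)" using props[OF Aa] .
    have V: "ld B \<in> V" "y \<in> V" "x \<in> V" using PB PA xy by auto
    have "d (ld B) (ld A) \<le> d (ld B) y + d y (ld A)" using dtr V AV by blast
    also have "d y (ld A) \<le> d y x + d x (ld A)" using dtr V AV by blast
    also have "d (ld B) y = d y (ld B)" using dsy V by blast
    also have "d y x = d x y" using dsy V by blast
    finally have "d (ld B) (ld A) < 2 * radius tau r0 a" using PA PB xy by force
    then show "z \<in> open_ball V d (ld A) (2 ^ (eta + 2) * rho)" unfolding open_ball_def e1 using B V by simp
  qed
  have sep: "\<forall>x\<in>ld ` T. \<forall>y\<in>ld ` T. x \<noteq> y \<longrightarrow> 2 * rho \<le> d x y"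
  proof (intro ballI impI)
    fix x y assume "x \<in> ld ` T" "y \<in> ld ` T" "x \<noteq> y"
    then obtain B B' where "B \<in> T" "B' \<in> T" "x = ld B" "y = ld B'" by blast
    then have "(x, B) \<in> S a" "(y, B') \<in> S a" using ldp unfolding T_def by auto
    then show "2 * rho \<le> d x y" unfolding e2 using I[OF am] \<open>x \<noteq> y\<close> by fastforce
  qed
  have "real (card (ld ` T)) \<le> lam ^ (eta + 2)"
    using packing[OF assms(3,4) AV rho X sep] .
  then have cT: "real (card T) \<le> lam ^ (eta + 2)" using card_image[OF inj] by simp
  have lam1: "lam \<ge> 1"
  proof -
    obtain v where v: "v \<in> V" using assms(2) by fastforce
    have "\<exists>W. W \<subseteq> V \<and> finite W \<and> real (card W) \<le> lam \<and>
      open_ball V d v (2 * 1) \<subseteq> (\<Union>w\<in>W. open_ball V d w 1)"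
      using assms(4) v unfolding doubling_def by (metis zero_less_one)
    then obtain W :: "'a set" where W: "finite W" "real (card W) \<le> lam"
      "open_ball V d v 2 \<subseteq> (\<Union>w\<in>W. open_ball V d w 1)" by auto
    have "v \<in> open_ball V d v 2" using v d0[OF assms(3,5,6,8,9,10)] unfolding open_ball_def by simp
    then have "W \<noteq> {}" using W(3) by blast
    then have "card W \<ge> 1" using W(1) by (simp add: Suc_le_eq card_gt_0_iff)
    then show ?thesis using W(2) by linarith
  qed
  have "lam ^ (eta + 2) \<le> lam ^ (3 + eta)" using lam1 by (intro power_increasing) auto
  moreover have "card {B. B \<noteq> A \<and>
                      (\<exists>j\<le>m. A \<in> clusters S j \<and> B \<in> clusters S j \<and> knows d tau r0 A B j) \<and>
                      top_level S m A \<le> top_level S m B} \<le> card T"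
    using card_mono[OF finT sub] .
  ultimately show ?thesis using cT by linarith
qed

end
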